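(* In the Setting below, let $V_{2i}$ and $V_{2j}$ be two (possibly equal) of the $2$-dimensional summands of $J_{\mathcal M}$, with bases $\{u_i,v_i\}$ and $\{u_j,v_j\}$ satisfying $uH=u$, $vH=-v$, $uE=v$, $uF=0$, $vE=0$, $vF=-u$. Then $(u_iu_j)E=-u_iv_j$, $(u_iv_j)E=-\tfrac12 v_iv_j$, $(v_iv_j)E=0$, $(u_iu_j)F=0$, $(u_iv_j)F=\tfrac12 u_iu_j$, $(v_iv_j)F=u_iv_j$, $(u_iu_j)H=-u_iu_j$, $(u_iv_j)H=0$, $(v_iv_j)H=v_iv_j$, and $u_iv_j=v_iu_j$. Moreover $J(xy,a,b)=0$ for all $x,y\in J_{\mathcal M}$ and $a,b\in L$ (so $J_{\mathcal M}^2$ is a Lie $L$-module), and if $i=j$ then $V_{2i}V_{2i}=0$.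
   Context: Setting. Let $\mathbb F$ be a field of characteristic different from $2$ and $3$. A Malcev algebra is an anticommutative algebra $\mathcal M$ over $\mathbb F$ satisfying $(xz)(yt)=((xy)z)t+((yz)t)x+((zt)x)y+((tx)y)z$. Products are left-normed: $xyz=(xy)z$, $xyzt=((xy)z)t$. Put $J(x,y,z)=xyz+yzx+zxy$ (the Jacobian), $\{x,y,z\}=xyz-xzy+2x(yz)$, and $h(y,z,t,x,u)=\{yz,t,u\}x+\{yz,t,x\}u+\{yx,z,u\}t+\{yu,z,x\}t$. The variety $\mathcal H$ consists of the Malcev algebras satisfying $h(y,z,t,x,u)=0$ identically. Let $L=\mathfrak{sl}_2(\mathbb F)$ with basis $E,H,F$ and products $EH=E$, $FH=-F$, $EF=\tfrac12 H$. Standing assumption: $\mathcal M\in\mathcal H$ contains $L$ as a subalgebra and $mL\neq 0$ for every $0\neq m\in\mathcal M$. Define $N_{\mathcal M}=\{m\in\mathcal M: J(m,a,b)=0\ \forall a,b\in L\}$ and $J_{\mathcal M}=\{m\in\mathcal M:\{m,a,b\}=0\ \forall a,b\in L\}$. Known facts (from prior work): $\mathcal M=N_{\mathcal M}\oplus J_{\mathcal M}$; $J_{\mathcal M}$ is a direct sum of $L$-submodules $V_{2i}$, each with a basis $\{u_i,v_i\}$ satisfying $u_iH=u_i$, $v_iH=-v_i$, $u_iE=v_i$, $u_iF=0$, $v_iE=0$, $v_iF=-u_i$. *)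

theory Defs
  imports Main "HOL.Vector_Spaces"
begin

text \<open>An algebra over a field 'f is a vector space 'm (scalar multiplication sc)
 with a product mul. Products are left-normed in the paper.\<close>

definition bilinear_prod :: "('f::field \<Rightarrow> 'm::ab_group_add \<Rightarrow> 'm) \<Rightarrow> ('m \<Rightarrow> 'm \<Rightarrow> 'm) \<Rightarrow> bool" where
  "bilinear_prod sc mul \<longleftrightarrow>
     (\<forall>x y z. mul (x + y) z = mul x z + mul y z) \<and>
     (\<forall>x y z. mul x (y + z) = mul x y + mul x z) \<and>
     (\<forall>c x y. mul (sc c x) y = sc c (mul x y)) \<and>
     (\<forall>c x y. mul x (sc c y) = sc c (mul x y))"

definition malcev_algebra :: "('f::field \<Rightarrow> 'm::ab_group_add \<Rightarrow> 'm) \<Rightarrow> ('m \<Rightarrow> 'm \<Rightarrow> 'm) \<Rightarrow> bool" where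
  "malcev_algebra sc mul \<longleftrightarrow>
     vector_space sc \<and> bilinear_prod sc mul \<and>
     (\<forall>x. mul x x = 0) \<and>
     (\<forall>x y z t. mul (mul x z) (mul y t) =
        mul (mul (mul x y) z) t + mul (mul (mul y z) t) x
      + mul (mul (mul z t) x) y + mul (mul (mul t x) y) z)"

definition jac :: "('m::ab_group_add \<Rightarrow> 'm \<Rightarrow> 'm) \<Rightarrow> 'm \<Rightarrow> 'm \<Rightarrow> 'm \<Rightarrow> 'm" where
  "jac mul x y z = mul (mul x y) z + mul (mul y z) x + mul (mul z x) y"

definition trip :: "('m::ab_group_add \<Rightarrow> 'm \<Rightarrow> 'm) \<Rightarrow> 'm \<Rightarrow> 'm \<Rightarrow> 'm \<Rightarrow> 'm" where
  "trip mul x y z = mul (mul x y) z - mul (mul x z) y + (mul x (mul y z) + mul x (mul y z))"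

definition hfun :: "('m::ab_group_add \<Rightarrow> 'm \<Rightarrow> 'm) \<Rightarrow> 'm \<Rightarrow> 'm \<Rightarrow> 'm \<Rightarrow> 'm \<Rightarrow> 'm \<Rightarrow> 'm" where
  "hfun mul y z t x u =
     mul (trip mul (mul y z) t u) x + mul (trip mul (mul y z) t x) u
   + mul (trip mul (mul y x) z u) t + mul (trip mul (mul y u) z x) t"

definition in_variety_H :: "('f::field \<Rightarrow> 'm::ab_group_add \<Rightarrow> 'm) \<Rightarrow> ('m \<Rightarrow> 'm \<Rightarrow> 'm) \<Rightarrow> bool" where
  "in_variety_H sc mul \<longleftrightarrow> malcev_algebra sc mul \<and> (\<forall>y z t x u. hfun mul y z t x u = 0)"

definition sl2_triple :: "('f::field \<Rightarrow> 'm::ab_group_add \<Rightarrow> 'm) \<Rightarrow> ('m \<Rightarrow> 'm \<Rightarrow> 'm) \<Rightarrow> 'm \<Rightarrow> 'm \<Rightarrow> 'm \<Rightarrow> bool" where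
  "sl2_triple sc mul E H F \<longleftrightarrow>
     E \<noteq> H \<and> E \<noteq> F \<and> H \<noteq> F \<and> \<not> module.dependent sc {E, H, F} \<and>
     mul E H = E \<and> mul F H = - F \<and> mul E F = sc (1/2) H"

definition Lsub :: "('f::field \<Rightarrow> 'm::ab_group_add \<Rightarrow> 'm) \<Rightarrow> 'm \<Rightarrow> 'm \<Rightarrow> 'm \<Rightarrow> 'm set" where
  "Lsub sc E H F = module.span sc {E, H, F}"

definition NM :: "('f::field \<Rightarrow> 'm::ab_group_add \<Rightarrow> 'm) \<Rightarrow> ('m \<Rightarrow> 'm \<Rightarrow> 'm) \<Rightarrow> 'm \<Rightarrow> 'm \<Rightarrow> 'm \<Rightarrow> 'm set" where
  "NM sc mul E H F = {m. \<forall>a\<in>Lsub sc E H F. \<forall>b\<in>Lsub sc E H F. jac mul m a b = 0}"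

definition JM :: "('f::field \<Rightarrow> 'm::ab_group_add \<Rightarrow> 'm) \<Rightarrow> ('m \<Rightarrow> 'm \<Rightarrow> 'm) \<Rightarrow> 'm \<Rightarrow> 'm \<Rightarrow> 'm \<Rightarrow> 'm set" where
  "JM sc mul E H F = {m. \<forall>a\<in>Lsub sc E H F. \<forall>b\<in>Lsub sc E H F. trip mul m a b = 0}"

definition std_pair :: "('m::ab_group_add \<Rightarrow> 'm \<Rightarrow> 'm) \<Rightarrow> 'm \<Rightarrow> 'm \<Rightarrow> 'm \<Rightarrow> 'm \<Rightarrow> 'm \<Rightarrow> bool" where
  "std_pair mul E H F u v \<longleftrightarrow>
     mul u H = u \<and> mul v H = - v \<and> mul u E = v \<and> mul u F = 0 \<and> mul v E = 0 \<and> mul v F = - u"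

text \<open>J_M is the direct sum of the 2-dimensional summands V_{2k} = span{u k, v k}, k \<in> I:
 the family (u k, v k)_{k\<in>I} is an (injectively indexed) basis of J_M.\<close>
definition J_decomposition :: "('f::field \<Rightarrow> 'm::ab_group_add \<Rightarrow> 'm) \<Rightarrow> ('m \<Rightarrow> 'm \<Rightarrow> 'm) \<Rightarrow> 'm \<Rightarrow> 'm \<Rightarrow> 'm
     \<Rightarrow> 'i set \<Rightarrow> ('i \<Rightarrow> 'm) \<Rightarrow> ('i \<Rightarrow> 'm) \<Rightarrow> bool" where
  "J_decomposition sc mul E H F I u v \<longleftrightarrow>
     (\<forall>k\<in>I. std_pair mul E H F (u k) (v k)) \<and>
     inj_on (\<lambda>p. if snd p then u (fst p) else v (fst p)) (I \<times> UNIV) \<and>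
     \<not> module.dependent sc (u ` I \<union> v ` I) \<and>
     module.span sc (u ` I \<union> v ` I) = JM sc mul E H F"

end

theory Submission imports Defs begin

locale malc =
  fixes mul :: "'m::ab_group_add \<Rightarrow> 'm \<Rightarrow> 'm"
  assumes addL: "mul (x + y) z = mul x z + mul y z"
    and addR: "mul x (y + z) = mul x y + mul x z"
    and anti0: "mul x x = 0"
    and mal: "mul (mul x z) (mul y t) =
        mul (mul (mul x y) z) t + mul (mul (mul y z) t) x
      + mul (mul (mul z t) x) y + mul (mul (mul t x) y) z"
begin

lemma zeroL[simp]: "mul 0 y = 0" using addL[of 0 0 y] by simp
lemma zeroR[simp]: "mul x 0 = 0" using addR[of x 0 0] by simp
lemma negL[simp]: "mul (- x) y = - mul x y"
  using addL[of "-x" x y] by (simp add: eq_neg_iff_add_eq_0)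
lemma negR[simp]: "mul x (- y) = - mul x y"
  using addR[of x "-y" y] by (simp add: eq_neg_iff_add_eq_0)
lemma diffL: "mul (x - y) z = mul x z - mul y z" using addL[of x "-y" z] by simp
lemma diffR: "mul x (y - z) = mul x y - mul x z" using addR[of x y "-z"] by simp
lemma anti: "mul x y = - mul y x"
proof -
  have "mul (x+y) (x+y) = mul x x + mul y x + (mul x y + mul y y)" by (simp only: addL addR)
  then have "mul x y + mul y x = 0" by (simp add: anti0 add.commute)
  then show ?thesis by (simp add: eq_neg_iff_add_eq_0)
qed

definition D :: "'m \<Rightarrow> 'm \<Rightarrow> 'm \<Rightarrow> 'm" where
  "D a b w = mul w (mul a b) + mul (mul w a) b - mul (mul w b) a"

lemma sagle: "D a b (mul x y) = mul (D a b x) y + mul x (D a b y)"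
proof -
  note fl = anti[of b a] anti[of "mul b x" "mul a y"] anti[of "mul x y" "mul a b"]
    anti[of x a] anti[of x b] anti[of x "mul a b"] anti[of x "mul (mul a b) y"]
    anti[of x "mul (mul a y) b"] anti[of x "mul (mul b y) a"] anti[of y a] anti[of y b]
    anti[of y "mul a b"] anti[of y x]
  have e1: "mul (mul x b) (mul y a) - (mul (mul (mul x y) b) a + mul (mul (mul y b) a) x + mul (mul (mul b a) x) y + mul (mul (mul a x) y) b) = 0" using mal[of x b y a] by simp
  have e2: "mul (mul x y) (mul a b) - (mul (mul (mul x a) y) b + mul (mul (mul a y) b) x + mul (mul (mul y b) x) a + mul (mul (mul b x) a) y) = 0" using mal[of x y a b] by simp
  have e3: "mul (mul x b) (mul a y) - (mul (mul (mul x a) b) y + mul (mul (mul a b) y) x + mul (mul (mul b y) x) a + mul (mul (mul y x) a) b) = 0" using mal[of x b a y] by simp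
  have "D a b (mul x y) - (mul (D a b x) y + mul x (D a b y)) = (mul (mul x b) (mul y a) - (mul (mul (mul x y) b) a + mul (mul (mul y b) a) x + mul (mul (mul b a) x) y + mul (mul (mul a x) y) b)) + (mul (mul x y) (mul a b) - (mul (mul (mul x a) y) b + mul (mul (mul a y) b) x + mul (mul (mul y b) x) a + mul (mul (mul b x) a) y)) + (mul (mul x b) (mul a y) - (mul (mul (mul x a) b) y + mul (mul (mul a b) y) x + mul (mul (mul b y) x) a + mul (mul (mul y x) a) b))"
    unfolding D_def
    apply (simp only: addL addR diffL diffR negL negR fl minus_minus)
    by (simp add: algebra_simps)
  then have "D a b (mul x y) - (mul (D a b x) y + mul x (D a b y)) = 0" using e1 e2 e3 by simp
  then show ?thesis by simp
qed
end

locale st = malc mul + vector_space sc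
  for mul :: "'m::ab_group_add \<Rightarrow> 'm \<Rightarrow> 'm" and sc :: "'f::field \<Rightarrow> 'm \<Rightarrow> 'm" +
  fixes E H F :: 'm and I :: "'i set" and u v :: "'i \<Rightarrow> 'm"
  assumes scL: "mul (sc c x) y = sc c (mul x y)" and scR: "mul x (sc c y) = sc c (mul x y)"
  and c2: "(2::'f) \<noteq> 0" and c3: "(3::'f) \<noteq> 0"
  and EH: "mul E H = E" and FH: "mul F H = - F" and EF: "mul E F = sc (1/2) H"
  and nondeg: "\<And>m. m \<noteq> 0 \<Longrightarrow> \<exists>a\<in>Lsub sc E H F. mul m a \<noteq> 0"
  and NJsum: "\<And>m. \<exists>n\<in>NM sc mul E H F. \<exists>x\<in>JM sc mul E H F. m = n + x"
  and NJint: "NM sc mul E H F \<inter> JM sc mul E H F = {0}"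
  and std: "\<And>k. k\<in>I \<Longrightarrow> std_pair mul E H F (u k) (v k)"
  and Jspan: "span (u`I \<union> v`I) = JM sc mul E H F"
begin

abbreviation "LL \<equiv> Lsub sc E H F"
abbreviation "NN \<equiv> NM sc mul E H F"
abbreviation "JJ \<equiv> JM sc mul E H F"

lemma LL_eq: "LL = span {E,H,F}" by (simp add: Lsub_def)

lemma dbl_cancel: "p + p = q + q \<Longrightarrow> p = (q::'m)"
proof -
  assume "p + p = q + q"
  then have "sc 2 (p - q) = 0"
    by (simp add: scale_right_diff_distrib scale_left_distrib[of 1 1, simplified] algebra_simps)
  then show ?thesis using c2 by simp
qed

lemma span_map:
  assumes x: "x \<in> span B" and S: "subspace S"
    and ga: "\<And>x y. g (x+y) = g x + g y" and gs: "\<And>c x. g (sc c x) = sc c (g x)"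
    and gb: "\<And>b. b\<in>B \<Longrightarrow> g b \<in> S"
  shows "g x \<in> S"
proof -
  have g0: "g 0 = 0" using ga[of 0 0] by simp
  have "subspace {x. g x \<in> S}"
    unfolding subspace_def using S g0 ga gs
    by (auto intro: subspace_0 subspace_add subspace_scale)
  then show ?thesis using span_induct[OF x, of "\<lambda>x. g x \<in> S"] gb by auto
qed

lemma HF: "mul H F = F" using anti[of H F] FH by simp

lemma LL_mul_gen: "a \<in> {E,H,F} \<Longrightarrow> b \<in> {E,H,F} \<Longrightarrow> mul a b \<in> span {E,H,F}"
proof -
  have HE: "mul H E = - E" using anti[of H E] EH by simp
  have FE: "mul F E = - sc (1/2) H" using anti[of F E] EF by simp
  have S: "E \<in> span {E,H,F}" "H \<in> span {E,H,F}" "F \<in> span {E,H,F}"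
    by (auto intro: span_base)
  assume "a \<in> {E,H,F}" "b \<in> {E,H,F}"
  then show ?thesis using S
    by (auto simp: anti0 EH FH EF HF HE FE span_zero span_neg span_scale)
qed

lemma LL_mul: "a \<in> LL \<Longrightarrow> b \<in> LL \<Longrightarrow> mul a b \<in> LL"
proof -
  assume a: "a \<in> LL" and b: "b \<in> LL"
  have A: "mul a c \<in> span {E,H,F}" if c: "c \<in> {E,H,F}" for c
    using span_map[of a "{E,H,F}" "span {E,H,F}" "\<lambda>a. mul a c"] a c LL_mul_gen
    by (auto simp: LL_eq addL scL)
  show ?thesis
    using span_map[of b "{E,H,F}" "span {E,H,F}" "mul a"] b A
    by (auto simp: LL_eq addR scR)
qed

lemma E_L: "E \<in> LL" and H_L: "H \<in> LL" and F_L: "F \<in> LL"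
  by (auto simp: LL_eq span_base)

lemma D_add: "D a b (x + y) = D a b x + D a b y"
  by (simp add: D_def addL algebra_simps)
lemma D_sc: "D a b (sc c x) = sc c (D a b x)"
  by (simp add: D_def scL scale_right_distrib scale_right_diff_distrib)
lemma D_neg: "D a b (- x) = - D a b x"
  by (simp add: D_def algebra_simps)
lemma D_diff: "D a b (x - y) = D a b x - D a b y"
  by (simp add: D_def diffL algebra_simps)
lemma D_0: "D a b 0 = 0"
  by (simp add: D_def)
lemma D_L: "a \<in> LL \<Longrightarrow> b \<in> LL \<Longrightarrow> c \<in> LL \<Longrightarrow> D a b c \<in> LL"
  unfolding D_def LL_eq
  by (metis LL_eq LL_mul span_add span_diff)

lemma D_jac: "D a b (jac mul x y z) = jac mul (D a b x) y z + jac mul x (D a b y) z + jac mul x y (D a b z)"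
  unfolding jac_def by (simp add: D_add sagle addL addR algebra_simps)
lemma D_trip: "D a b (trip mul x y z) = trip mul (D a b x) y z + trip mul x (D a b y) z + trip mul x y (D a b z)"
  unfolding trip_def by (simp only: D_add D_diff sagle addL addR diffL diffR) (simp add: algebra_simps)

lemma jac_add: "jac mul (x+y) a b = jac mul x a b + jac mul y a b"
  unfolding jac_def by (simp add: addL addR algebra_simps)
lemma jac_sc: "jac mul (sc c x) a b = sc c (jac mul x a b)"
  unfolding jac_def by (simp add: scL scR scale_right_distrib)
lemma trip_add: "trip mul (x+y) a b = trip mul x a b + trip mul y a b"
  unfolding trip_def by (simp add: addL addR algebra_simps)
lemma trip_sc: "trip mul (sc c x) a b = sc c (trip mul x a b)"
  unfolding trip_def by (simp add: scL scR scale_right_distrib scale_right_diff_distrib)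

lemma NN_sub: "subspace NN"
proof -
  have "jac mul 0 a b = 0" for a b by (simp add: jac_def)
  then show ?thesis unfolding subspace_def NM_def by (auto simp: jac_add jac_sc)
qed
lemma JJ_sub: "subspace JJ"
proof -
  have "trip mul 0 a b = 0" for a b by (simp add: trip_def)
  then show ?thesis unfolding subspace_def JM_def by (auto simp: trip_add trip_sc)
qed

lemma NN_D: "n \<in> NN \<Longrightarrow> a \<in> LL \<Longrightarrow> b \<in> LL \<Longrightarrow> D a b n \<in> NN"
proof -
  assume n: "n \<in> NN" and a: "a \<in> LL" and b: "b \<in> LL"
  show ?thesis unfolding NM_def
  proof (intro CollectI ballI)
    fix p q assume p: "p \<in> LL" and q: "q \<in> LL"
    have "D a b (jac mul n p q) = 0" using n p q by (simp add: NM_def D_0)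
    moreover have "jac mul n (D a b p) q = 0" "jac mul n p (D a b q) = 0"
      using n p q a b D_L by (auto simp: NM_def)
    ultimately show "jac mul (D a b n) p q = 0" using D_jac[of a b n p q] by simp
  qed
qed

lemma JJ_D: "m \<in> JJ \<Longrightarrow> a \<in> LL \<Longrightarrow> b \<in> LL \<Longrightarrow> D a b m \<in> JJ"
proof -
  assume n: "m \<in> JJ" and a: "a \<in> LL" and b: "b \<in> LL"
  show ?thesis unfolding JM_def
  proof (intro CollectI ballI)
    fix p q assume p: "p \<in> LL" and q: "q \<in> LL"
    have "D a b (trip mul m p q) = 0" using n p q by (simp add: JM_def D_0)
    moreover have "trip mul m (D a b p) q = 0" "trip mul m p (D a b q) = 0"
      using n p q a b D_L by (auto simp: JM_def)
    ultimately show "trip mul (D a b m) p q = 0" using D_trip[of a b m p q] by simp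
  qed
qed

lemma trip_D: "trip mul m a b = D a b m + mul m (mul a b)"
  unfolding trip_def D_def by (simp add: algebra_simps)
lemma jac_D: "jac mul n a b = D a b n - (mul n (mul a b) + mul n (mul a b))"
  unfolding jac_def D_def using anti[of "mul a b" n] anti[of b n]
  by (simp add: algebra_simps)

lemma JJ_Dval: "m \<in> JJ \<Longrightarrow> a \<in> LL \<Longrightarrow> b \<in> LL \<Longrightarrow> D a b m = - mul m (mul a b)"
  using trip_D[of m a b] by (auto simp: JM_def eq_neg_iff_add_eq_0)
lemma NN_Dval: "n \<in> NN \<Longrightarrow> a \<in> LL \<Longrightarrow> b \<in> LL \<Longrightarrow> D a b n = mul n (mul a b) + mul n (mul a b)"
  using jac_D[of n a b] by (auto simp: NM_def)


definition W :: "'m \<Rightarrow> 'm" where "W w = D E F w + D E F w"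

lemma W_der: "W (mul x y) = mul (W x) y + mul x (W y)"
  unfolding W_def by (simp add: sagle addL addR algebra_simps)
lemma W_add: "W (x + y) = W x + W y"
  unfolding W_def by (simp add: D_add algebra_simps)
lemma W_sc: "W (sc c x) = sc c (W x)"
  unfolding W_def by (simp add: D_sc scale_right_distrib)
lemma W_0: "W 0 = 0" unfolding W_def by (simp add: D_0)

lemma halfsum: "sc (1/2) p + sc (1/2) p = p"
proof -
  have "sc (1/2) p + sc (1/2) p = sc (1/2 + 1/2) p" by (simp only: scale_left_distrib)
  moreover have "(1/2 + 1/2 :: 'f) = 1" using c2 by (simp add: field_simps)
  ultimately show ?thesis by simp
qed

lemma half: "p + p = q \<Longrightarrow> p = sc (1/2) q"
proof -
  assume h: "p + p = q"
  show ?thesis unfolding h[symmetric] by (simp add: scale_right_distrib halfsum)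
qed

lemma JJ_W: "m \<in> JJ \<Longrightarrow> W m = - mul m H"
proof -
  assume m: "m \<in> JJ"
  have "D E F m = - sc (1/2) (mul m H)"
    using JJ_Dval[OF m E_L F_L] by (simp add: EF scR)
  then have "W m = - (sc (1/2) (mul m H) + sc (1/2) (mul m H))" unfolding W_def by simp
  then show ?thesis by (simp only: halfsum)
qed

lemma JJ_W_in: "m \<in> JJ \<Longrightarrow> W m \<in> JJ"
  unfolding W_def using JJ_D[OF _ E_L F_L] JJ_sub by (simp add: subspace_add)
lemma NN_W_in: "n \<in> NN \<Longrightarrow> W n \<in> NN"
  unfolding W_def using NN_D[OF _ E_L F_L] NN_sub by (simp add: subspace_add)

lemma uJ: "k \<in> I \<Longrightarrow> u k \<in> JJ" and vJ: "k \<in> I \<Longrightarrow> v k \<in> JJ"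
  using Jspan[symmetric] by (auto intro: span_base)

lemma JJ_HH: "m \<in> JJ \<Longrightarrow> mul (mul m H) H = m"
proof -
  assume m: "m \<in> JJ"
  have "(\<lambda>m. mul (mul m H) H - m) m \<in> {0}"
  proof (rule span_map[of m "u`I \<union> v`I"])
    show "m \<in> span (u`I \<union> v`I)" using m Jspan by simp
    show "subspace {0}" by simp
    show "\<And>x y. mul (mul (x + y) H) H - (x + y) = (mul (mul x H) H - x) + (mul (mul y H) H - y)"
      by (simp add: addL algebra_simps)
    show "\<And>c x. mul (mul (sc c x) H) H - sc c x = sc c (mul (mul x H) H - x)"
      by (simp add: scL scale_right_diff_distrib)
    show "\<And>b. b \<in> u`I \<union> v`I \<Longrightarrow> mul (mul b H) H - b \<in> {0}"
      using std by (auto simp: std_pair_def)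
  qed
  then show ?thesis by simp
qed

lemma JJ_WW: "m \<in> JJ \<Longrightarrow> W (W m) = m"
  using JJ_W JJ_W_in JJ_HH by simp

lemma NJ_zero: "n \<in> NN \<Longrightarrow> m \<in> JJ \<Longrightarrow> n + m = 0 \<Longrightarrow> m = 0"
proof -
  assume n: "n \<in> NN" and m: "m \<in> JJ" and s: "n + m = 0"
  have "m = - n" using s by (simp add: eq_neg_iff_add_eq_0 add.commute)
  then have "m \<in> NN" using n NN_sub by (simp add: subspace_neg)
  then show ?thesis using m NJint by auto
qed

lemma three: "p + p + p = 0 \<Longrightarrow> p = (0::'m)"
proof -
  assume "p + p + p = 0"
  moreover have "sc 3 p = p + p + p"
  proof -
    have "sc (1+1+1) p = p + p + p" by (simp only: scale_left_distrib scale_one)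
    moreover have "(1+1+1::'f) = 3" by simp
    ultimately show ?thesis by simp
  qed
  ultimately have "sc 3 p = 0" by simp
  then show ?thesis using c3 by simp
qed

lemma JJ_sq: assumes x: "x \<in> JJ" and y: "y \<in> JJ" shows "mul x y \<in> NN"
proof -
  define z where "z = mul x y"
  have Wz: "W z = mul (W x) y + mul x (W y)" unfolding z_def by (rule W_der)
  have WWz: "W (W z) = (z + z) + (mul (W x) (W y) + mul (W x) (W y))"
    unfolding Wz z_def by (simp add: W_add W_der JJ_WW x y algebra_simps)
  have WWWz: "W (W (W z)) = W z + W z + W z + W z"
    unfolding WWz by (simp add: W_add W_der JJ_WW x y Wz algebra_simps)
  obtain n m where n: "n \<in> NN" and m: "m \<in> JJ" and zs: "z = n + m" using NJsum by blast
  have Wm: "W m \<in> JJ" using JJ_W_in m .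
  have WWm: "W (W m) = m" using JJ_WW m .
  have f1: "(W (W (W n)) - (W n + W n + W n + W n)) + (W (W (W m)) - (W m + W m + W m + W m)) = 0"
    using WWWz unfolding zs by (simp add: W_add algebra_simps)
  have f2: "W (W (W n)) - (W n + W n + W n + W n) \<in> NN"
    using n NN_W_in NN_sub by (simp add: subspace_add subspace_diff)
  have f3: "W (W (W m)) - (W m + W m + W m + W m) \<in> JJ"
    using m JJ_W_in JJ_sub by (simp add: subspace_add subspace_diff)
  have e: "W (W (W m)) - (W m + W m + W m + W m) = 0" by (rule NJ_zero[OF f2 f3 f1])
  have e2: "W (W (W m)) = W m" using WWm by simp
  have e3: "\<And>a::'m. a - (a + a + a + a) = - (a + a + a)" by (simp add: algebra_simps)
  from e have "W m - (W m + W m + W m + W m) = 0" by (simp only: e2)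
  then have "- (W m + W m + W m) = 0" by (simp only: e3)
  then have "W m + W m + W m = 0" by (simp only: neg_equal_0_iff_equal)
  then have Wm0: "W m = 0" by (rule three)
  have "m = 0" using WWm by (simp only: Wm0 W_0)
  then have "z = n" using zs by simp
  then have "mul x y = n" using z_def by simp
  then show ?thesis using n by simp
qed

lemma KEY: assumes x: "x \<in> JJ" and y: "y \<in> JJ" and a: "a \<in> LL" and b: "b \<in> LL"
  shows "mul (mul x y) (mul a b) + mul (mul x y) (mul a b) = - (mul (mul x (mul a b)) y + mul x (mul y (mul a b)))"
proof -
  have "D a b (mul x y) = mul (mul x y) (mul a b) + mul (mul x y) (mul a b)"
    using NN_Dval[OF JJ_sq[OF x y] a b] .
  moreover have "D a b (mul x y) = - (mul (mul x (mul a b)) y + mul x (mul y (mul a b)))"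
    using sagle[of a b x y] JJ_Dval[OF x a b] JJ_Dval[OF y a b] by simp
  ultimately show ?thesis by simp
qed

lemma KE: "x \<in> JJ \<Longrightarrow> y \<in> JJ \<Longrightarrow> mul (mul x y) E + mul (mul x y) E = - (mul (mul x E) y + mul x (mul y E))"
  using KEY[OF _ _ E_L H_L] EH by simp
lemma KF: "x \<in> JJ \<Longrightarrow> y \<in> JJ \<Longrightarrow> mul (mul x y) F + mul (mul x y) F = - (mul (mul x F) y + mul x (mul y F))"
  using KEY[OF _ _ H_L F_L] HF by simp
lemma KH: assumes x: "x \<in> JJ" and y: "y \<in> JJ"
  shows "mul (mul x y) H + mul (mul x y) H = - (mul (mul x H) y + mul x (mul y H))"
proof -
  have "sc (1/2) (mul (mul x y) H + mul (mul x y) H) = sc (1/2) (- (mul (mul x H) y + mul x (mul y H)))"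
    using KEY[OF x y E_L F_L] EF by (simp add: scL scR scale_right_distrib scale_right_diff_distrib)
  then show ?thesis using c2 by simp
qed


lemma dbl_neg: "p + p = - (q + q) \<Longrightarrow> p = - (q::'m)"
  by (rule dbl_cancel) (simp add: algebra_simps)

lemma result:
  assumes i: "i \<in> I" and j: "j \<in> I"
  shows "mul (mul (u i) (u j)) E = - mul (u i) (v j)
       \<and> mul (mul (u i) (v j)) E = - sc (1/2) (mul (v i) (v j))
       \<and> mul (mul (v i) (v j)) E = 0
       \<and> mul (mul (u i) (u j)) F = 0
       \<and> mul (mul (u i) (v j)) F = sc (1/2) (mul (u i) (u j))
       \<and> mul (mul (v i) (v j)) F = mul (u i) (v j)
       \<and> mul (mul (u i) (u j)) H = - mul (u i) (u j)
       \<and> mul (mul (u i) (v j)) H = 0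
       \<and> mul (mul (v i) (v j)) H = mul (v i) (v j)
       \<and> mul (u i) (v j) = mul (v i) (u j)
       \<and> (\<forall>x\<in>JM sc mul E H F. \<forall>y\<in>JM sc mul E H F.
            \<forall>a\<in>Lsub sc E H F. \<forall>b\<in>Lsub sc E H F. jac mul (mul x y) a b = 0)
       \<and> (i = j \<longrightarrow> (\<forall>x\<in>span {u i, v i}. \<forall>y\<in>span {u i, v i}. mul x y = 0))"
proof -
  have si: "std_pair mul E H F (u i) (v i)" using std i by blast
  have sj: "std_pair mul E H F (u j) (v j)" using std j by blast
  note sp = si[unfolded std_pair_def] sj[unfolded std_pair_def]
  have ui: "u i \<in> JJ" and vi: "v i \<in> JJ" and uj: "u j \<in> JJ" and vj: "v j \<in> JJ"
    using uJ vJ i j by auto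
  have E1: "mul (mul (u i) (u j)) E + mul (mul (u i) (u j)) E = - (mul (v i) (u j) + mul (u i) (v j))"
    using KE[OF ui uj] sp by simp
  have E2: "mul (mul (u i) (v j)) E + mul (mul (u i) (v j)) E = - mul (v i) (v j)"
    using KE[OF ui vj] sp by simp
  have E2': "mul (mul (v i) (u j)) E + mul (mul (v i) (u j)) E = - mul (v i) (v j)"
    using KE[OF vi uj] sp by simp
  have E3: "mul (mul (v i) (v j)) E + mul (mul (v i) (v j)) E = 0"
    using KE[OF vi vj] sp by simp
  have F1: "mul (mul (u i) (u j)) F + mul (mul (u i) (u j)) F = 0"
    using KF[OF ui uj] sp by simp
  have F2: "mul (mul (u i) (v j)) F + mul (mul (u i) (v j)) F = mul (u i) (u j)"
    using KF[OF ui vj] sp by simp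
  have F2': "mul (mul (v i) (u j)) F + mul (mul (v i) (u j)) F = mul (u i) (u j)"
    using KF[OF vi uj] sp by simp
  have F3: "mul (mul (v i) (v j)) F + mul (mul (v i) (v j)) F = mul (u i) (v j) + mul (v i) (u j)"
    using KF[OF vi vj] sp by (simp add: add.commute)
  have H1: "mul (mul (u i) (u j)) H + mul (mul (u i) (u j)) H = - (mul (u i) (u j) + mul (u i) (u j))"
    using KH[OF ui uj] sp by simp
  have H2: "mul (mul (u i) (v j)) H + mul (mul (u i) (v j)) H = 0"
    using KH[OF ui vj] sp by simp
  have H2': "mul (mul (v i) (u j)) H + mul (mul (v i) (u j)) H = 0"
    using KH[OF vi uj] sp by simp
  have H3: "mul (mul (v i) (v j)) H + mul (mul (v i) (v j)) H = mul (v i) (v j) + mul (v i) (v j)"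
    using KH[OF vi vj] sp by simp
  define w where "w = mul (u i) (v j) - mul (v i) (u j)"
  have wE: "mul w E = 0"
    using dbl_cancel[of "mul (mul (u i) (v j)) E" "mul (mul (v i) (u j)) E"] E2 E2'
    unfolding w_def by (simp add: diffL)
  have wF: "mul w F = 0"
    using dbl_cancel[of "mul (mul (u i) (v j)) F" "mul (mul (v i) (u j)) F"] F2 F2'
    unfolding w_def by (simp add: diffL)
  have wH: "mul w H = 0"
    using dbl_cancel[of "mul (mul (u i) (v j)) H" "mul (mul (v i) (u j)) H"] H2 H2'
    unfolding w_def by (simp add: diffL)
  have wL: "mul w a \<in> {0}" if a: "a \<in> LL" for a
  proof (rule span_map[of a "{E,H,F}"])
    show "a \<in> span {E,H,F}" using a LL_eq by simp
  qed (auto simp: addR scR wE wF wH)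
  have "w = 0" using nondeg wL by blast
  then have uv: "mul (u i) (v j) = mul (v i) (u j)" unfolding w_def by simp
  have r1: "mul (mul (u i) (u j)) E = - mul (u i) (v j)"
    using E1 unfolding uv[symmetric] by (rule dbl_neg)
  have r2: "mul (mul (u i) (v j)) E = - sc (1/2) (mul (v i) (v j))"
    using half[OF E2] by simp
  have r3: "mul (mul (v i) (v j)) E = 0" using half[OF E3] by simp
  have r4: "mul (mul (u i) (u j)) F = 0" using half[OF F1] by simp
  have r5: "mul (mul (u i) (v j)) F = sc (1/2) (mul (u i) (u j))" using half[OF F2] .
  have r6: "mul (mul (v i) (v j)) F = mul (u i) (v j)"
    using F3 unfolding uv[symmetric] by (rule dbl_cancel)
  have r7: "mul (mul (u i) (u j)) H = - mul (u i) (u j)" using H1 by (rule dbl_neg)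
  have r8: "mul (mul (u i) (v j)) H = 0" using half[OF H2] by simp
  have r9: "mul (mul (v i) (v j)) H = mul (v i) (v j)" using H3 by (rule dbl_cancel)
  have r11: "\<forall>x\<in>JJ. \<forall>y\<in>JJ. \<forall>a\<in>LL. \<forall>b\<in>LL. jac mul (mul x y) a b = 0"
    using JJ_sq by (auto simp: NM_def)
  have r12: "\<forall>x\<in>span {u i, v i}. \<forall>y\<in>span {u i, v i}. mul x y = 0" if ij: "i = j"
  proof -
    have uv0: "mul (u i) (v i) = 0"
    proof -
      have "mul (u i) (v i) = - mul (u i) (v i)" using uv anti[of "v i" "u i"] ij by simp
      then have "mul (u i) (v i) + mul (u i) (v i) = 0 + 0" by (simp add: eq_neg_iff_add_eq_0)
      then show ?thesis by (rule dbl_cancel)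
    qed
    have vu0: "mul (v i) (u i) = 0" using uv0 anti[of "v i" "u i"] by simp
    have B: "mul c b \<in> {0}" if "c \<in> {u i, v i}" "b \<in> {u i, v i}" for c b
      using that uv0 vu0 anti0 by auto
    have B2: "mul x b \<in> {0}" if x: "x \<in> span {u i, v i}" and b: "b \<in> {u i, v i}" for x b
    proof (rule span_map[OF x])
      show "\<And>c. c \<in> {u i, v i} \<Longrightarrow> mul c b \<in> {0}" using B b by blast
    qed (auto simp: addL scL)
    show ?thesis
    proof (intro ballI)
      fix x y assume x: "x \<in> span {u i, v i}" and y: "y \<in> span {u i, v i}"
      have "mul x y \<in> {0}"
      proof (rule span_map[OF y])
        show "\<And>c. c \<in> {u i, v i} \<Longrightarrow> mul x c \<in> {0}" using B2 x by blast
      qed (auto simp: addR scR)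
      then show "mul x y = 0" by simp
    qed
  qed
  show ?thesis using r1 r2 r3 r4 r5 r6 r7 r8 r9 uv r11 r12 by blast
qed

end
theorem lemmal3:
  fixes sc :: "'f::field \<Rightarrow> 'm::ab_group_add \<Rightarrow> 'm"
    and mul :: "'m \<Rightarrow> 'm \<Rightarrow> 'm"
    and E H F :: 'm
    and I :: "'i set" and u v :: "'i \<Rightarrow> 'm"
    and i j :: 'i
  assumes char2: "(2::'f) \<noteq> 0" and char3: "(3::'f) \<noteq> 0"
    and HM: "in_variety_H sc mul"
    and L: "sl2_triple sc mul E H F"
    and nondeg: "\<forall>m. m \<noteq> 0 \<longrightarrow> (\<exists>a\<in>Lsub sc E H F. mul m a \<noteq> 0)"
    and NJ_sum: "\<forall>m. \<exists>n\<in>NM sc mul E H F. \<exists>x\<in>JM sc mul E H F. m = n + x"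
    and NJ_int: "NM sc mul E H F \<inter> JM sc mul E H F = {0}"
    and Jdec: "J_decomposition sc mul E H F I u v"
    and i: "i \<in> I" and j: "j \<in> I"
  shows "mul (mul (u i) (u j)) E = - mul (u i) (v j)
       \<and> mul (mul (u i) (v j)) E = - sc (1/2) (mul (v i) (v j))
       \<and> mul (mul (v i) (v j)) E = 0
       \<and> mul (mul (u i) (u j)) F = 0
       \<and> mul (mul (u i) (v j)) F = sc (1/2) (mul (u i) (u j))
       \<and> mul (mul (v i) (v j)) F = mul (u i) (v j)
       \<and> mul (mul (u i) (u j)) H = - mul (u i) (u j)
       \<and> mul (mul (u i) (v j)) H = 0
       \<and> mul (mul (v i) (v j)) H = mul (v i) (v j)
       \<and> mul (u i) (v j) = mul (v i) (u j)
       \<and> (\<forall>x\<in>JM sc mul E H F. \<forall>y\<in>JM sc mul E H F.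
            \<forall>a\<in>Lsub sc E H F. \<forall>b\<in>Lsub sc E H F. jac mul (mul x y) a b = 0)
       \<and> (i = j \<longrightarrow> (\<forall>x\<in>module.span sc {u i, v i}. \<forall>y\<in>module.span sc {u i, v i}. mul x y = 0))"
proof -
  from HM have ma: "malcev_algebra sc mul" by (simp add: in_variety_H_def)
  then have vs: "vector_space sc" and bp: "bilinear_prod sc mul" and a0: "\<forall>x. mul x x = 0"
    and mc: "\<forall>x y z t. mul (mul x z) (mul y t) =
        mul (mul (mul x y) z) t + mul (mul (mul y z) t) x
      + mul (mul (mul z t) x) y + mul (mul (mul t x) y) z"
    by (simp_all add: malcev_algebra_def)
  interpret st mul sc E H F I u v
  proof unfold_locales
    show "\<And>x y z. mul (x + y) z = mul x z + mul y z" using bp by (simp add: bilinear_prod_def)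
    show "\<And>x y z. mul x (y + z) = mul x y + mul x z" using bp by (simp add: bilinear_prod_def)
    show "\<And>x. mul x x = 0" using a0 by simp
    show "\<And>x z y t. mul (mul x z) (mul y t) =
        mul (mul (mul x y) z) t + mul (mul (mul y z) t) x
      + mul (mul (mul z t) x) y + mul (mul (mul t x) y) z" using mc by simp
    show "\<And>a x y. sc a (x + y) = sc a x + sc a y" using vs by (simp add: vector_space_def)
    show "\<And>a b x. sc (a + b) x = sc a x + sc b x" using vs by (simp add: vector_space_def)
    show "\<And>a b x. sc a (sc b x) = sc (a * b) x" using vs by (simp add: vector_space_def)
    show "\<And>x. sc 1 x = x" using vs by (simp add: vector_space_def)
    show "\<And>c x y. mul (sc c x) y = sc c (mul x y)" using bp by (simp add: bilinear_prod_def)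
    show "\<And>c x y. mul x (sc c y) = sc c (mul x y)" using bp by (simp add: bilinear_prod_def)
    show "(2::'f) \<noteq> 0" by (rule char2)
    show "(3::'f) \<noteq> 0" by (rule char3)
    show "mul E H = E" "mul F H = - F" "mul E F = sc (1/2) H" using L by (simp_all add: sl2_triple_def)
    show "\<And>m. m \<noteq> 0 \<Longrightarrow> \<exists>a\<in>Lsub sc E H F. mul m a \<noteq> 0" using nondeg by blast
    show "\<And>m. \<exists>n\<in>NM sc mul E H F. \<exists>x\<in>JM sc mul E H F. m = n + x" using NJ_sum by blast
    show "NM sc mul E H F \<inter> JM sc mul E H F = {0}" by (rule NJ_int)
    show "\<And>k. k \<in> I \<Longrightarrow> std_pair mul E H F (u k) (v k)" using Jdec by (simp add: J_decomposition_def)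
    show "module.span sc (u ` I \<union> v ` I) = JM sc mul E H F" using Jdec by (simp add: J_decomposition_def)
  qed
  show ?thesis using result[OF i j] .
qed

end
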